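(* Let $P\in\mathbb{R}[X,Y]$ satisfy: (i) $P(-X,-Y)=P(X,Y)$; (ii) $P(X,Y)=-P(Y,X)$; (iii) $2P(X,Y)=P(Y,-X-Y)-P(X,-X-Y)$; (iv) $\frac{1}{X}P(Y,X-Y)+\frac{1}{Y}P(X,Y-X)=0$ as an identity of rational functions. Then $P=0$. *)

theory Defs
  imports "HOL-Computational_Algebra.Polynomial"
begin

text \<open>A bivariate real polynomial P in R[X,Y] is represented as an element of (R[Y])[X],
  i.e. of type real poly poly (outer variable X, coefficients are polynomials in Y).\<close>

definition eval2 :: "real poly poly \<Rightarrow> real \<Rightarrow> real \<Rightarrow> real" where
  "eval2 P x y = poly (map_poly (\<lambda>q. poly q y) P) x"

end

theory Submission
  imports Defs
begin

lemma poly_zero_inf: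
  fixes p :: "real poly"
  assumes "\<And>x. x \<notin> S \<Longrightarrow> poly p x = 0" and "finite S"
  shows "p = 0"
proof (rule ccontr)
  assume "p \<noteq> 0"
  then have "finite {x. poly p x = 0}" by (rule poly_roots_finite)
  moreover have "UNIV - S \<subseteq> {x. poly p x = 0}" using assms(1) by auto
  ultimately have "finite (UNIV - S :: real set)" by (rule finite_subset[rotated])
  then have "finite (UNIV :: real set)" using assms(2) by (metis Diff_infinite_finite)
  then show False using infinite_UNIV_char_0[where 'a=real] by blast
qed

theorem mainTheorem9:
  fixes P :: "real poly poly"
  assumes i: "\<And>x y. eval2 P (-x) (-y) = eval2 P x y"
    and ii: "\<And>x y. eval2 P x y = - eval2 P y x"
    and iii: "\<And>x y. 2 * eval2 P x y = eval2 P y (-x-y) - eval2 P x (-x-y)"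
    and iv: "\<And>x y. x \<noteq> 0 \<Longrightarrow> y \<noteq> 0 \<Longrightarrow>
               (1/x) * eval2 P y (x-y) + (1/y) * eval2 P x (y-x) = 0"
  shows "P = 0"
proof -
  define f where "f = eval2 P"
  have cyc: "f x y = f y (-x-y)" for x y
  proof -
    have 1: "2 * f x y = f y (-x-y) + f (-x-y) x"
      using iii[of x y] ii[of x "-x-y"] unfolding f_def by simp
    have 2: "2 * f y (-x-y) = f (-x-y) x + f x y"
      using iii[of y "-x-y"] ii[of y x] unfolding f_def by (simp add: algebra_simps)
    show ?thesis using 1 2 by linarith
  qed
  have z: "f a b = 0" if "a \<noteq> 0" "b \<noteq> 0" "a + b \<noteq> 0" for a b
  proof -
    have e: "(1/a) * f (a+b) (-b) + (1/(a+b)) * f a b = 0"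
      using iv[of a "a+b"] that unfolding f_def by simp
    have "f (a+b) (-b) = f (-b) (-a)" using cyc[of "a+b" "-b"] by simp
    also have "\<dots> = f b a" using i[of b a] unfolding f_def by simp
    also have "\<dots> = - f a b" using ii[of b a] unfolding f_def by simp
    finally have "(1/a) * (- f a b) + (1/(a+b)) * f a b = 0" using e by simp
    then have "f a b * (1/(a+b) - 1/a) = 0" by (simp add: algebra_simps)
    moreover have "1/(a+b) - 1/a \<noteq> 0" using that by simp
    ultimately show ?thesis by simp
  qed
  have Q: "map_poly (\<lambda>q. poly q y) P = 0" if "y \<noteq> 0" for y
    by (rule poly_zero_inf[where S="{0, -y}"]) (use z that in \<open>auto simp: f_def eval2_def\<close>)
  have "coeff P n = 0" for n
  proof (rule poly_zero_inf[where S="{0}"])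
    fix y :: real assume "y \<notin> {0}"
    then have "coeff (map_poly (\<lambda>q. poly q y) P) n = 0" using Q by simp
    then show "poly (coeff P n) y = 0" by (simp add: coeff_map_poly)
  qed simp
  then show ?thesis by (simp add: poly_eq_iff)
qed

end
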